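(* Let $n,\alpha$ be positive integers and $\varepsilon\in(0,1)$. Suppose a dataset $S$ over the universe $[n]$ is distributed across $\alpha$ players with the promise that there are at most $C\le F_0(S)$ pairwise collisions. Then there exists a protocol that uses total communication \[\tilde{O}\left(\alpha\log n+\max\left(\frac{1}{F_0(S)},\varepsilon^2\right)\cdot\frac{C}{\varepsilon^2}\log n\right)\] bits and, with probability at least $\frac{2}{3}$, outputs a $(1+\varepsilon)$-approximation to $F_0(S)$.
   Context: Distributed distinct element estimation (coordinator model): there are $\alpha$ servers (players), one of which acts as coordinator; server $a$ holds a vector $v^{(a)}\in\{0,1\}^n$, and $S$ denotes the union (multiset) of all items held by the servers. All communication goes between the coordinator and the other servers; the communication cost is the total number of bits exchanged in the worst case. $F_0(S)$ is the number of $j\in[n]$ with $v^{(a)}_j=1$ for some $a$. The number of pairwise collisions is the number of triples $(a,b,i)$ with $1\le a<b\le\alpha$, $i\in[n]$ and $v^{(a)}_i=v^{(b)}_i=1$. A $(1+\varepsilon)$-approximation to $F$ is a value $\hat F$ with $(1-\varepsilon)F\le\hat F\le(1+\varepsilon)F$. $\tilde{O}$ hides polylogarithmic factors. *)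

theory Defs
  imports "HOL-Probability.Probability"
begin

text \<open>Players are indexed by {..<alpha}; player 0 is the coordinator,
  players 1..alpha-1 are the servers. Player a holds a set X a \<subseteq> {..<n}
  (the support of its vector v^(a)). Each player a has a private random seed drawn
  independently from a discrete distribution rnd a.

  The protocol proceeds in exchanges: the coordinator (knowing its input, its seed and the
  whole transcript so far) either halts or sends a message m to a server a; server a then
  replies with a message r computed from its input, its seed, its own view (the previous
  exchanges with it) and m. Each exchange costs 1 + |m| + |r| bits (the extra bit accounts
  for delimiting / signalling the exchange).\<close>

type_synonym transcript = "(nat \<times> bool list \<times> bool list) list"

record protocol =
  steps :: nat
  rnd :: "nat \<Rightarrow> nat pmf"
  coord_act :: "nat set \<Rightarrow> nat \<Rightarrow> transcript \<Rightarrow> (nat \<times> bool list) option"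
  server_reply :: "nat \<Rightarrow> nat set \<Rightarrow> nat \<Rightarrow> (bool list \<times> bool list) list \<Rightarrow> bool list \<Rightarrow> bool list"
  out :: "nat set \<Rightarrow> nat \<Rightarrow> transcript \<Rightarrow> real"

definition view :: "nat \<Rightarrow> transcript \<Rightarrow> (bool list \<times> bool list) list" where
  "view a t = map snd (filter (\<lambda>x. fst x = a) t)"

fun exec :: "protocol \<Rightarrow> nat \<Rightarrow> (nat \<Rightarrow> nat set) \<Rightarrow> (nat \<Rightarrow> nat) \<Rightarrow> nat \<Rightarrow> transcript \<Rightarrow> transcript" where
  "exec P \<alpha> X rs 0 t = t"
| "exec P \<alpha> X rs (Suc k) t =
     (case coord_act P (X 0) (rs 0) t of
        None \<Rightarrow> t
      | Some (a, m) \<Rightarrow>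
          (if 0 < a \<and> a < \<alpha>
           then exec P \<alpha> X rs k (t @ [(a, m, server_reply P a (X a) (rs a) (view a t) m)])
           else t))"

definition final_transcript :: "protocol \<Rightarrow> nat \<Rightarrow> (nat \<Rightarrow> nat set) \<Rightarrow> (nat \<Rightarrow> nat) \<Rightarrow> transcript" where
  "final_transcript P \<alpha> X rs = exec P \<alpha> X rs (steps P) []"

definition comm_cost :: "protocol \<Rightarrow> nat \<Rightarrow> (nat \<Rightarrow> nat set) \<Rightarrow> (nat \<Rightarrow> nat) \<Rightarrow> nat" where
  "comm_cost P \<alpha> X rs =
     (\<Sum>(a, m, r) \<leftarrow> final_transcript P \<alpha> X rs. 1 + length m + length r)"

definition output_of :: "protocol \<Rightarrow> nat \<Rightarrow> (nat \<Rightarrow> nat set) \<Rightarrow> (nat \<Rightarrow> nat) \<Rightarrow> real" where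
  "output_of P \<alpha> X rs = out P (X 0) (rs 0) (final_transcript P \<alpha> X rs)"

definition seeds :: "protocol \<Rightarrow> nat \<Rightarrow> (nat \<Rightarrow> nat) pmf" where
  "seeds P \<alpha> = Pi_pmf {..<\<alpha>} 0 (rnd P)"

definition F0 :: "nat \<Rightarrow> (nat \<Rightarrow> nat set) \<Rightarrow> nat" where
  "F0 \<alpha> X = card (\<Union>a<\<alpha>. X a)"

definition collisions :: "nat \<Rightarrow> (nat \<Rightarrow> nat set) \<Rightarrow> nat" where
  "collisions \<alpha> X = card {(a, b, i). a < b \<and> b < \<alpha> \<and> i \<in> X a \<and> i \<in> X b}"

end

theory Submission
  imports Defs
begin

definition coin :: "bool pmf" where "coin = pmf_of_set UNIV"

lemma coin_single: "measure_pmf.prob coin {v} = 1/2"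
  by (simp add: coin_def measure_pmf_of_set)

lemma coin_True: "measure_pmf.prob coin {True} = 1/2" and coin_False: "measure_pmf.prob coin {False} = 1/2"
  by (simp_all add: coin_single)

lemma pmf_prob_compl: "measure_pmf.prob M (UNIV - A) = 1 - measure_pmf.prob M A"
  using measure_pmf.prob_compl[of A M] by simp

primrec bits_pmf :: "nat \<Rightarrow> bool list pmf" where
  "bits_pmf 0 = return_pmf []"
| "bits_pmf (Suc w) = map_pmf (\<lambda>(c,l). c # l) (pair_pmf coin (bits_pmf w))"

primrec par :: "bool list \<Rightarrow> nat \<Rightarrow> bool" where
  "par [] x = False"
| "par (c # l) x = ((c \<and> odd x) \<noteq> par l (x div 2))"

lemma prob_cons_split:
  "measure_pmf.prob (map_pmf (\<lambda>(c,l). c # l) (pair_pmf coin B)) {a. Q a}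
   = (measure_pmf.prob B {l. Q (True # l)} + measure_pmf.prob B {l. Q (False # l)}) / 2"
proof -
  have e: "(\<lambda>(c,l). c # l) -` {a. Q a} = {True} \<times> {l. Q (True # l)} \<union> {False} \<times> {l. Q (False # l)}"
  proof (rule set_eqI)
    fix z :: "bool \<times> _" show "z \<in> (\<lambda>(c,l). c # l) -` {a. Q a} \<longleftrightarrow> z \<in> {True} \<times> {l. Q (True # l)} \<union> {False} \<times> {l. Q (False # l)}"
      by (cases z; cases "fst z") auto
  qed
  have "measure_pmf.prob (pair_pmf coin B) ({True} \<times> {l. Q (True # l)} \<union> {False} \<times> {l. Q (False # l)})
     = measure_pmf.prob (pair_pmf coin B) ({True} \<times> {l. Q (True # l)}) + measure_pmf.prob (pair_pmf coin B) ({False} \<times> {l. Q (False # l)})"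
    by (subst measure_pmf.finite_measure_Union) auto
  also have "\<dots> = (measure_pmf.prob B {l. Q (True # l)} + measure_pmf.prob B {l. Q (False # l)}) / 2"
    by (simp add: measure_pmf_prob_product coin_single)
  finally show ?thesis using e by simp
qed

lemma bits_par:
  fixes x y :: nat
  shows "x \<noteq> y \<Longrightarrow> x < 2^w \<Longrightarrow> y < 2^w \<Longrightarrow> measure_pmf.prob (bits_pmf w) {a. par a x = par a y} = 1/2"
proof (induction w arbitrary: x y)
  case 0
  then show ?case by simp
next
  case (Suc w)
  have hx: "x div 2 < 2^w" "y div 2 < 2^w" using Suc.prems by auto
  show ?case
  proof (cases "odd x = odd y")
    case True
    then have ne: "x div 2 \<noteq> y div 2" using Suc.prems(1)
      by (metis div_mult_mod_eq odd_iff_mod_2_eq_one even_iff_mod_2_eq_zero)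
    have "measure_pmf.prob (bits_pmf (Suc w)) {a. par a x = par a y}
      = (measure_pmf.prob (bits_pmf w) {l. par l (x div 2) = par l (y div 2)} + measure_pmf.prob (bits_pmf w) {l. par l (x div 2) = par l (y div 2)}) / 2"
      using True unfolding bits_pmf.simps(2) prob_cons_split by simp (rule arg_cong[where f="measure_pmf.prob _"], auto)
    then show ?thesis using Suc.IH[OF ne hx] by simp
  next
    case False
    have c: "{l. par l (x div 2) \<noteq> par l (y div 2)} = UNIV - {l. par l (x div 2) = par l (y div 2)}" by auto
    have "measure_pmf.prob (bits_pmf (Suc w)) {a. par a x = par a y}
      = (measure_pmf.prob (bits_pmf w) {l. par l (x div 2) \<noteq> par l (y div 2)} + measure_pmf.prob (bits_pmf w) {l. par l (x div 2) = par l (y div 2)}) / 2"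
      using False unfolding bits_pmf.simps(2) prob_cons_split by simp (smt (verit, best) Collect_cong add.commute)
    also have "\<dots> = 1/2" unfolding c pmf_prob_compl by simp
    finally show ?thesis .
  qed
qed

definition row_pmf :: "nat \<Rightarrow> (bool list \<times> bool) pmf" where
  "row_pmf w = pair_pmf (bits_pmf w) coin"

lemma prob_row_split:
  "measure_pmf.prob (row_pmf w) {(a,b). Q a b}
   = (measure_pmf.prob (bits_pmf w) {a. Q a True} + measure_pmf.prob (bits_pmf w) {a. Q a False}) / 2"
proof -
  have e: "{(a,b). Q a b} = {a. Q a True} \<times> {True} \<union> {a. Q a False} \<times> {False}"
  proof (rule set_eqI)
    fix z :: "_ \<times> bool" show "z \<in> {(a,b). Q a b} \<longleftrightarrow> z \<in> {a. Q a True} \<times> {True} \<union> {a. Q a False} \<times> {False}"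
      by (cases z; cases "snd z") auto
  qed
  have "measure_pmf.prob (row_pmf w) ({a. Q a True} \<times> {True} \<union> {a. Q a False} \<times> {False})
     = measure_pmf.prob (row_pmf w) ({a. Q a True} \<times> {True}) + measure_pmf.prob (row_pmf w) ({a. Q a False} \<times> {False})"
    by (subst measure_pmf.finite_measure_Union) auto
  also have "\<dots> = (measure_pmf.prob (bits_pmf w) {a. Q a True} + measure_pmf.prob (bits_pmf w) {a. Q a False}) / 2"
    by (simp add: row_pmf_def measure_pmf_prob_product coin_single)
  finally show ?thesis using e by simp
qed

lemma row1: "measure_pmf.prob (row_pmf w) {(a,b). b = par a x} = 1/2"
proof -
  have c: "{a. \<not> par a x} = UNIV - {a. par a x}" by auto
  show ?thesis
    by (simp add: prob_row_split c pmf_prob_compl)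
qed

lemma row2:
  assumes "x \<noteq> y" "x < 2^w" "y < 2^w"
  shows "measure_pmf.prob (row_pmf w) {(a,b). b = par a x \<and> b = par a y} = 1/4"
proof -
  have "measure_pmf.prob (row_pmf w) {(a,b). b = par a x \<and> b = par a y}
     = (measure_pmf.prob (bits_pmf w) {a. par a x \<and> par a y} + measure_pmf.prob (bits_pmf w) {a. \<not> par a x \<and> \<not> par a y}) / 2"
    by (simp add: prob_row_split)
  also have "measure_pmf.prob (bits_pmf w) {a. par a x \<and> par a y} + measure_pmf.prob (bits_pmf w) {a. \<not> par a x \<and> \<not> par a y}
     = measure_pmf.prob (bits_pmf w) ({a. par a x \<and> par a y} \<union> {a. \<not> par a x \<and> \<not> par a y})"
    by (subst measure_pmf.finite_measure_Union) auto
  also have "{a. par a x \<and> par a y} \<union> {a. \<not> par a x \<and> \<not> par a y} = {a. par a x = par a y}" by auto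
  finally show ?thesis using bits_par[OF assms] by simp
qed


primrec rows_pmf :: "nat \<Rightarrow> nat \<Rightarrow> (bool list \<times> bool) list pmf" where
  "rows_pmf w 0 = return_pmf []"
| "rows_pmf w (Suc K) = map_pmf (\<lambda>(r,s). r # s) (pair_pmf (row_pmf w) (rows_pmf w K))"

lemma rows_prob:
  "k \<le> K \<Longrightarrow> measure_pmf.prob (rows_pmf w K) {s. \<forall>r\<in>set (take k s). R r} = (measure_pmf.prob (row_pmf w) {r. R r})^k"
proof (induction K arbitrary: k)
  case 0
  then show ?case by simp
next
  case (Suc K)
  show ?case
  proof (cases k)
    case 0
    then show ?thesis by simp
  next
    case (Suc k')
    have e: "(\<lambda>(r,s). r # s) -` {s. \<forall>r\<in>set (take k s). R r} = {r. R r} \<times> {s. \<forall>r\<in>set (take k' s). R r}"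
      using Suc by auto
    have "measure_pmf.prob (rows_pmf w (Suc K)) {s. \<forall>r\<in>set (take k s). R r}
        = measure_pmf.prob (row_pmf w) {r. R r} * measure_pmf.prob (rows_pmf w K) {s. \<forall>r\<in>set (take k' s). R r}"
      unfolding rows_pmf.simps(2) measure_map_pmf e by (simp add: measure_pmf_prob_product)
    then show ?thesis using Suc.IH[of k'] Suc.prems \<open>k = Suc k'\<close> by simp
  qed
qed

lemma finite_bits: "finite (set_pmf (bits_pmf w))"
  by (induction w) auto

lemma set_bits: "a \<in> set_pmf (bits_pmf w) \<Longrightarrow> length a = w"
  by (induction w arbitrary: a) auto

lemma finite_rows: "finite (set_pmf (rows_pmf w K))"
  by (induction K) (auto simp: row_pmf_def finite_bits)

lemma set_rows: "s \<in> set_pmf (rows_pmf w K) \<Longrightarrow> length s = K \<and> (\<forall>(a,b)\<in>set s. length a = w)"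
  by (induction K arbitrary: s) (auto simp: row_pmf_def set_bits; fastforce)+

lemma integrable_rows[simp]: "integrable (measure_pmf (rows_pmf w K)) (f :: _ \<Rightarrow> real)"
  by (rule integrable_measure_pmf_finite) (rule finite_rows)

definition acc :: "(bool list \<times> bool) list \<Rightarrow> nat \<Rightarrow> bool" where
  "acc rs x = (\<forall>(a,b)\<in>set rs. b = par a x)"

definition Zv :: "nat \<Rightarrow> nat \<Rightarrow> (bool list \<times> bool) list \<Rightarrow> real" where
  "Zv k i s = (if acc (take k s) i then 1 else 0)"

lemma prob_acc1:
  assumes "k \<le> K"
  shows "measure_pmf.prob (rows_pmf w K) {s. acc (take k s) x} = (1/2)^k"
proof -
  have "{s. acc (take k s) x} = {s. \<forall>r\<in>set (take k s). (\<lambda>(a,b). b = par a x) r}"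
    by (auto simp: acc_def)
  then show ?thesis using rows_prob[OF assms, of w "\<lambda>(a,b). b = par a x"] row1 by simp
qed

lemma prob_acc2:
  assumes "k \<le> K" "x \<noteq> y" "x < 2^w" "y < 2^w"
  shows "measure_pmf.prob (rows_pmf w K) {s. acc (take k s) x \<and> acc (take k s) y} = (1/4)^k"
proof -
  have "{s. acc (take k s) x \<and> acc (take k s) y} = {s. \<forall>r\<in>set (take k s). (\<lambda>(a,b). b = par a x \<and> b = par a y) r}"
    by (auto simp: acc_def)
  then show ?thesis using rows_prob[OF assms(1), of w "\<lambda>(a,b). b = par a x \<and> b = par a y"] row2[OF assms(2-4)] by simp
qed

lemma exp_Z:
  assumes "k \<le> K"
  shows "measure_pmf.expectation (rows_pmf w K) (Zv k i) = (1/2)^k"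
proof -
  have "Zv k i = indicator {s. acc (take k s) i}"
    by (auto simp: Zv_def fun_eq_iff)
  then show ?thesis using prob_acc1[OF assms] by simp
qed

lemma exp_ZZ:
  assumes "k \<le> K" "i \<noteq> j" "i < 2^w" "j < 2^w"
  shows "measure_pmf.expectation (rows_pmf w K) (\<lambda>s. Zv k i s * Zv k j s) = (1/4)^k"
proof -
  have "(\<lambda>s. Zv k i s * Zv k j s) = indicator {s. acc (take k s) i \<and> acc (take k s) j}"
    by (auto simp: Zv_def fun_eq_iff)
  then show ?thesis using prob_acc2[OF assms] by simp
qed

lemma exp_cov:
  assumes "k \<le> K" "i < 2^w" "j < 2^w"
  shows "measure_pmf.expectation (rows_pmf w K) (\<lambda>s. (Zv k i s - (1/2)^k) * (Zv k j s - (1/2)^k))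
     = (if i = j then (1/2)^k - (1/2)^k * (1/2)^k else 0)"
proof -
  let ?E = "measure_pmf.expectation (rows_pmf w K)"
  let ?p = "(1/2::real)^k"
  have ex: "(\<lambda>s. (Zv k i s - ?p) * (Zv k j s - ?p)) = (\<lambda>s. Zv k i s * Zv k j s - ?p * Zv k j s - ?p * Zv k i s + ?p * ?p)"
    by (auto simp: fun_eq_iff algebra_simps)
  have "?E (\<lambda>s. (Zv k i s - ?p) * (Zv k j s - ?p)) = ?E (\<lambda>s. Zv k i s * Zv k j s) - ?p * ?E (Zv k j) - ?p * ?E (Zv k i) + ?p * ?p"
    unfolding ex by (simp add: integral_diff integral_add)
  also have "\<dots> = (if i = j then ?p - ?p * ?p else 0)"
  proof (cases "i = j")
    case True
    have "(\<lambda>s. Zv k i s * Zv k i s) = Zv k i" by (auto simp: Zv_def fun_eq_iff)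
    then show ?thesis using True exp_Z[OF assms(1)] by simp
  next
    case False
    have "(1/4::real)^k = ?p * ?p" by (simp add: power_mult_distrib[symmetric])
    then show ?thesis using False exp_Z[OF assms(1)] exp_ZZ[OF assms(1) False assms(2,3)] by simp
  qed
  finally show ?thesis .
qed

lemma second_moment:
  assumes "k \<le> K" "finite U" "U \<subseteq> {..<2^w}"
  shows "measure_pmf.expectation (rows_pmf w K) (\<lambda>s. (\<Sum>i\<in>U. v i * (Zv k i s - (1/2)^k))^2)
     = (\<Sum>i\<in>U. (v i)^2 * ((1/2)^k - (1/2)^k * (1/2)^k))"
proof -
  let ?E = "measure_pmf.expectation (rows_pmf w K)"
  let ?p = "(1/2::real)^k"
  have "(\<lambda>s. (\<Sum>i\<in>U. v i * (Zv k i s - ?p))^2) = (\<lambda>s. \<Sum>i\<in>U. \<Sum>j\<in>U. v i * v j * ((Zv k i s - ?p) * (Zv k j s - ?p)))"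
    by (auto simp: fun_eq_iff power2_eq_square sum_product algebra_simps)
  then have "?E (\<lambda>s. (\<Sum>i\<in>U. v i * (Zv k i s - ?p))^2) = (\<Sum>i\<in>U. \<Sum>j\<in>U. v i * v j * ?E (\<lambda>s. (Zv k i s - ?p) * (Zv k j s - ?p)))"
    by (simp add: Bochner_Integration.integral_sum)
  also have "\<dots> = (\<Sum>i\<in>U. \<Sum>j\<in>U. v i * v j * (if i = j then ?p - ?p * ?p else 0))"
    using assms exp_cov by (intro sum.cong refl) (auto simp: subset_iff)
  also have "\<dots> = (\<Sum>i\<in>U. (v i)^2 * (?p - ?p * ?p))"
    using assms(2) by (simp add: power2_eq_square if_distrib sum.delta cong: if_cong)
  finally show ?thesis .
qed


primrec bin :: "nat \<Rightarrow> nat \<Rightarrow> bool list" where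
  "bin 0 x = []"
| "bin (Suc w) x = odd x # bin w (x div 2)"

primrec unbin :: "bool list \<Rightarrow> nat" where
  "unbin [] = 0"
| "unbin (b # l) = (if b then 1 else 0) + 2 * unbin l"

lemma length_bin[simp]: "length (bin w x) = w"
  by (induction w arbitrary: x) auto

lemma unbin_bin: "unbin (bin w x) = x mod 2^w"
proof (induction w arbitrary: x)
  case 0
  then show ?case by simp
next
  case (Suc w)
  have "x mod 2 ^ Suc w = 2 * (x div 2 mod 2^w) + x mod 2"
    by (simp add: mod_mult2_eq)
  then show ?case using Suc by (simp add: odd_iff_mod_2_eq_one)
qed

lemma unbin_bin_small: "x < 2^w \<Longrightarrow> unbin (bin w x) = x"
  by (simp add: unbin_bin)

function chunks :: "nat \<Rightarrow> bool list \<Rightarrow> (bool list \<times> bool) list" where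
  "chunks w s = (if length s \<le> w then [] else (take w s, s ! w) # chunks w (drop (Suc w) s))"
  by auto
termination by (relation "Wellfounded.measure (\<lambda>(w,s). length s)") auto

declare chunks.simps[simp del]

lemma chunks_concat:
  "(\<forall>(a,b)\<in>set rs. length a = w) \<Longrightarrow> chunks w (concat (map (\<lambda>(a,b). a @ [b]) rs)) = rs"
proof (induction rs)
  case Nil
  then show ?case by (simp add: chunks.simps)
next
  case (Cons r rs)
  obtain a b where r: "r = (a,b)" by force
  have la: "length a = w" using Cons.prems r by auto
  show ?case
    by (subst chunks.simps) (use Cons r la in auto)
qed

lemma exec_follow:
  assumes co: "\<And>j. j < length L \<Longrightarrow> coord_act P (X 0) (rs 0) (take j L) = Some (fst (L!j), fst (snd (L!j)))"
    and sv: "\<And>e. e \<in> set L \<Longrightarrow> 0 < fst e \<and> fst e < \<alpha> \<and>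
       (\<forall>v. server_reply P (fst e) (X (fst e)) (rs (fst e)) v (fst (snd e)) = snd (snd e))"
    and fin: "coord_act P (X 0) (rs 0) L = None"
  shows "length L - j \<le> m \<Longrightarrow> j \<le> length L \<Longrightarrow> exec P \<alpha> X rs m (take j L) = L"
proof (induction m arbitrary: j)
  case 0
  then show ?case by simp
next
  case (Suc m)
  show ?case
  proof (cases "j = length L")
    case True
    then show ?thesis using fin by simp
  next
    case False
    then have j: "j < length L" using Suc.prems by simp
    obtain a msg r where e: "L ! j = (a, msg, r)" by (metis prod.exhaust)
    have ej: "L ! j \<in> set L" using j by simp
    have tk: "take (Suc j) L = take j L @ [(a, msg, r)]" using j e by (simp add: take_Suc_conv_app_nth)
    have "exec P \<alpha> X rs (Suc m) (take j L) = exec P \<alpha> X rs m (take (Suc j) L)"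
      using co[OF j] sv[OF ej] e tk by simp
    also have "\<dots> = L" using Suc.IH[of "Suc j"] Suc.prems j by simp
    finally show ?thesis .
  qed
qed

lemma exec_follow0:
  assumes "\<And>j. j < length L \<Longrightarrow> coord_act P (X 0) (rs 0) (take j L) = Some (fst (L!j), fst (snd (L!j)))"
    and "\<And>e. e \<in> set L \<Longrightarrow> 0 < fst e \<and> fst e < \<alpha> \<and>
       (\<forall>v. server_reply P (fst e) (X (fst e)) (rs (fst e)) v (fst (snd e)) = snd (snd e))"
    and "coord_act P (X 0) (rs 0) L = None"
    and "length L \<le> steps P"
  shows "final_transcript P \<alpha> X rs = L"
  using exec_follow[OF assms(1-3), of 0 "steps P"] assms(4) by (simp add: final_transcript_def)

lemma Pi_prob0:
  assumes "0 < (\<alpha>::nat)"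
  shows "measure_pmf.prob (Pi_pmf {..<\<alpha>} 0 p) {rs. Q (rs 0)} = measure_pmf.prob (p 0) {s. Q s}"
proof -
  have "p 0 = map_pmf (\<lambda>f. f 0) (Pi_pmf {..<\<alpha>} 0 p)"
    by (subst Pi_pmf_component) (use assms in auto)
  then show ?thesis by (simp add: vimage_def)
qed

lemma Pi_set0:
  assumes "0 < (\<alpha>::nat)" "rs \<in> set_pmf (Pi_pmf {..<\<alpha>} 0 p)"
  shows "rs 0 \<in> set_pmf (p 0)"
proof -
  have "p 0 = map_pmf (\<lambda>f. f 0) (Pi_pmf {..<\<alpha>} 0 p)"
    by (subst Pi_pmf_component) (use assms in auto)
  then show ?thesis using assms(2) by (metis imageI set_map_pmf)
qed

lemma sum_list_le_len:
  "(\<And>e. e \<in> set xs \<Longrightarrow> f e \<le> (B::nat)) \<Longrightarrow> sum_list (map f xs) \<le> length xs * B"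
  by (induction xs) (auto simp: add_mono)


definition kc :: "nat \<Rightarrow> (nat \<Rightarrow> nat set) \<Rightarrow> nat \<Rightarrow> nat" where
  "kc \<alpha> X i = card {a. a < \<alpha> \<and> i \<in> X a}"

lemma double_count:
  assumes fin: "\<forall>a<\<alpha>. finite (X a)"
  shows "(\<Sum>a<\<alpha>. card (X a \<inter> A)) = (\<Sum>i\<in>(\<Union>a<\<alpha>. X a) \<inter> A. kc \<alpha> X i)"
proof -
  let ?U = "(\<Union>a<\<alpha>. X a)"
  have fU: "finite ?U" using fin by auto
  have "(\<Sum>a<\<alpha>. card (X a \<inter> A)) = card (SIGMA a:{..<\<alpha>}. X a \<inter> A)"
    using fin by (subst card_SigmaI) auto
  also have "(SIGMA a:{..<\<alpha>}. X a \<inter> A) = prod.swap ` (SIGMA i:?U \<inter> A. {a. a < \<alpha> \<and> i \<in> X a})"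
    by (auto simp: image_iff)
  also have "card \<dots> = card (SIGMA i:?U \<inter> A. {a. a < \<alpha> \<and> i \<in> X a})"
    by (rule card_image) (simp add: inj_on_def)
  also have "\<dots> = (\<Sum>i\<in>?U \<inter> A. kc \<alpha> X i)"
    using fU by (subst card_SigmaI) (auto simp: kc_def)
  finally show ?thesis .
qed

lemma pairs_bound:
  assumes "finite K"
  shows "card K * (card K - 1) \<le> 2 * card {(a,b). a < b \<and> a \<in> K \<and> b \<in> (K::nat set)}"
proof -
  let ?P = "{(a,b). a < b \<and> a \<in> K \<and> b \<in> K}"
  have fP: "finite ?P" by (rule finite_subset[of _ "K \<times> K"]) (use assms in auto)
  have "K \<times> K - (\<lambda>a. (a,a)) ` K \<subseteq> ?P \<union> prod.swap ` ?P"
    by (auto simp: image_iff)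
  then have "card (K \<times> K - (\<lambda>a. (a,a)) ` K) \<le> card (?P \<union> prod.swap ` ?P)"
    using fP by (intro card_mono) auto
  also have "\<dots> \<le> card ?P + card (prod.swap ` ?P)" by (rule card_Un_le)
  also have "\<dots> \<le> 2 * card ?P" using card_image_le[OF fP, of prod.swap] by simp
  finally have *: "card (K \<times> K - (\<lambda>a. (a,a)) ` K) \<le> 2 * card ?P" .
  have "card (K \<times> K - (\<lambda>a. (a,a)) ` K) = card K * card K - card K"
    using assms by (subst card_Diff_subset) (auto simp: card_cartesian_product card_image inj_on_def)
  then show ?thesis using * by (simp add: diff_mult_distrib2)
qed

lemma coll_bound:
  assumes fin: "\<forall>a<\<alpha>. finite (X a)"
  shows "(\<Sum>i\<in>(\<Union>a<\<alpha>. X a). kc \<alpha> X i * (kc \<alpha> X i - 1)) \<le> 2 * collisions \<alpha> X"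
proof -
  let ?U = "(\<Union>a<\<alpha>. X a)"
  let ?K = "\<lambda>i. {a. a < \<alpha> \<and> i \<in> X a}"
  let ?P = "\<lambda>i. {(a,b). a < b \<and> a \<in> ?K i \<and> b \<in> ?K i}"
  have fU: "finite ?U" using fin by auto
  have fP: "\<And>i. finite (?P i)" by (rule finite_subset[of _ "{..<\<alpha>} \<times> {..<\<alpha>}"]) auto
  have "{(a, b, i). a < b \<and> b < \<alpha> \<and> i \<in> X a \<and> i \<in> X b} = (\<lambda>(i,(a,b)). (a,b,i)) ` (SIGMA i:?U. ?P i)"
    by (auto simp: image_iff)
  then have "collisions \<alpha> X = card ((\<lambda>(i,(a,b)). (a,b,i)) ` (SIGMA i:?U. ?P i))"
    by (simp add: collisions_def)
  also have "\<dots> = card (SIGMA i:?U. ?P i)"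
    by (rule card_image) (auto simp: inj_on_def)
  also have "\<dots> = (\<Sum>i\<in>?U. card (?P i))"
    using fU fP by (subst card_SigmaI) auto
  finally have c: "collisions \<alpha> X = (\<Sum>i\<in>?U. card (?P i))" .
  have "(\<Sum>i\<in>?U. kc \<alpha> X i * (kc \<alpha> X i - 1)) \<le> (\<Sum>i\<in>?U. 2 * card (?P i))"
  proof (intro sum_mono)
    fix i
    have "finite (?K i)" by auto
    from pairs_bound[OF this] show "kc \<alpha> X i * (kc \<alpha> X i - 1) \<le> 2 * card (?P i)"
      by (simp add: kc_def)
  qed
  then show ?thesis using c by (simp add: sum_distrib_left)
qed


definition sched :: "nat \<Rightarrow> nat list \<Rightarrow> (nat \<times> nat) list" where
  "sched \<alpha> cs = concat (map (\<lambda>(a,c). map (\<lambda>j. (a,j)) [0..<c]) (zip [1..<\<alpha>] cs))"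

lemma sched_map: "sched \<alpha> (map f [1..<\<alpha>]) = concat (map (\<lambda>a. map (\<lambda>j. (a,j)) [0..<f a]) [1..<\<alpha>])"
  by (simp add: sched_def zip_map2 zip_same_conv_map comp_def)

lemma length_sched_map: "length (sched \<alpha> (map f [1..<\<alpha>])) = sum_list (map f [1..<\<alpha>])"
  unfolding sched_map by (simp add: length_concat comp_def)

lemma set_sched_map: "e \<in> set (sched \<alpha> (map f [1..<\<alpha>])) \<Longrightarrow> 1 \<le> fst e \<and> fst e < \<alpha> \<and> snd e < f (fst e)"
  unfolding sched_map by auto

definition rep :: "nat \<times> bool list \<times> bool list \<Rightarrow> nat" where
  "rep e = unbin (snd (snd e))"

definition sig :: "(bool list \<times> bool) list \<Rightarrow> nat \<Rightarrow> bool list" where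
  "sig rws k = concat (map (\<lambda>(a,b). a @ [b]) (take k rws))"

lemma sum_split0: "0 < (\<alpha>::nat) \<Longrightarrow> (\<Sum>a<\<alpha>. f a) = f 0 + sum_list (map f [1..<\<alpha>])"
  by (simp add: sum_set_upt_conv_sum_list_nat[symmetric] lessThan_atLeast0 sum.atLeast_Suc_lessThan)

locale proto =
  fixes n \<alpha> :: nat and \<epsilon> :: real and C :: nat
  assumes n_pos: "0 < n" and \<alpha>_pos: "0 < \<alpha>" and \<epsilon>_pos: "0 < \<epsilon>" and \<epsilon>_lt: "\<epsilon> < 1"
begin

definition w :: nat where "w = nat \<lceil>log 2 (real n + 1)\<rceil>"
definition Lg :: real where "Lg = log 2 (real n + real \<alpha> + 1 / \<epsilon> + 1)"
definition kmax :: nat where "kmax = nat \<lceil>2 * Lg\<rceil>"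
definition kf :: "nat \<Rightarrow> nat" where
  "kf S = (LEAST k. k = kmax \<or> \<epsilon>^2 * (real S)^2 < 2^(k+1) * 48 * real C)"
definition Mf :: "nat \<Rightarrow> real" where "Mf S = 6 * real S / 2^(kf S)"

definition Tset :: "bool list \<Rightarrow> nat set" where "Tset s = {x. acc (chunks w s) x}"

definition parseS :: "nat set \<Rightarrow> transcript \<Rightarrow> nat" where
  "parseS X0 t = card X0 + sum_list (map rep (take (\<alpha>-1) t))"
definition parsecs :: "transcript \<Rightarrow> nat list" where
  "parsecs t = map rep (take (\<alpha>-1) (drop (\<alpha>-1) t))"

definition coord :: "nat set \<Rightarrow> nat \<Rightarrow> transcript \<Rightarrow> (nat \<times> bool list) option" where
  "coord X0 s t = (let S = parseS X0 t; \<sigma> = sig (from_nat s) (kf S); cs = parsecs t;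
      N = card (X0 \<inter> Tset \<sigma>) + sum_list cs; Q = sched \<alpha> cs; q = length t - 2*(\<alpha>-1) in
    if length t < \<alpha> - 1 then Some (Suc (length t), [])
    else if length t < 2*(\<alpha>-1) then Some (length t - (\<alpha>-1) + 1, True # \<sigma>)
    else if Mf S < real N then None
    else if q < length Q then Some (fst (Q!q), False # bin w (snd (Q!q)) @ \<sigma>) else None)"

definition outf :: "nat set \<Rightarrow> nat \<Rightarrow> transcript \<Rightarrow> real" where
  "outf X0 s t = (let S = parseS X0 t; k = kf S; \<sigma> = sig (from_nat s) k; T = Tset \<sigma>; cs = parsecs t;
      N = card (X0 \<inter> T) + sum_list cs; E = rep ` set (drop (2*(\<alpha>-1)) t) in
    if Mf S < real N then 0 else real S - 2^k * (real N - real (card ((X0 \<inter> T) \<union> E))))"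

definition srv :: "nat \<Rightarrow> nat set \<Rightarrow> nat \<Rightarrow> (bool list \<times> bool list) list \<Rightarrow> bool list \<Rightarrow> bool list" where
  "srv a Xa r v m = (case m of [] \<Rightarrow> bin w (card Xa)
     | b # m' \<Rightarrow> if b then bin w (card (Xa \<inter> Tset m'))
                else bin w (sorted_list_of_set (Xa \<inter> Tset (drop w m')) ! unbin (take w m')))"

definition Prot :: protocol where
  "Prot = \<lparr>steps = 2*\<alpha> + \<alpha>*n,
     rnd = (\<lambda>a. if a = 0 then map_pmf to_nat (rows_pmf w kmax) else return_pmf 0),
     coord_act = coord, server_reply = srv, out = outf\<rparr>"

lemma w_big: "n < 2^w"
proof -
  have "real n + 1 = 2 powr (log 2 (real n + 1))" by simp
  also have "\<dots> \<le> 2 powr (real w)"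
    unfolding w_def by (intro powr_mono) (simp_all add: real_nat_ceiling_ge)
  also have "\<dots> = 2^w" by (simp add: powr_realpow)
  finally have "real (n + 1) \<le> real (2^w)" by simp
  then have "n + 1 \<le> 2^w" by (simp only: of_nat_le_iff)
  then show ?thesis by simp
qed

definition Sx :: "(nat \<Rightarrow> nat set) \<Rightarrow> nat" where "Sx X = (\<Sum>a<\<alpha>. card (X a))"
definition sx :: "(nat \<Rightarrow> nat set) \<Rightarrow> (bool list \<times> bool) list \<Rightarrow> bool list" where
  "sx X rws = sig rws (kf (Sx X))"
definition Tx where "Tx X rws = Tset (sx X rws)"
definition Nx where "Nx X rws = (\<Sum>a<\<alpha>. card (X a \<inter> Tx X rws))"
definition Qx where "Qx X rws = sched \<alpha> (map (\<lambda>a. card (X a \<inter> Tx X rws)) [1..<\<alpha>])"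

definition L1 where "L1 X = map (\<lambda>a. (a, [], bin w (card (X a)))) [1..<\<alpha>]"
definition L2 where "L2 X rws = map (\<lambda>a. (a, True # sx X rws, bin w (card (X a \<inter> Tx X rws)))) [1..<\<alpha>]"
definition g3 where "g3 X rws e = (fst e, False # bin w (snd e) @ sx X rws,
    bin w (sorted_list_of_set (X (fst e) \<inter> Tx X rws) ! snd e))"
definition L3 where "L3 X rws = map (g3 X rws) (Qx X rws)"
definition LL where "LL X rws = L1 X @ L2 X rws @ (if Mf (Sx X) < real (Nx X rws) then [] else L3 X rws)"

context
  fixes X :: "nat \<Rightarrow> nat set" and rws :: "(bool list \<times> bool) list"
  assumes Xs: "\<forall>a<\<alpha>. X a \<subseteq> {..<n}"
begin

lemma finX: "a < \<alpha> \<Longrightarrow> finite (X a)"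
  using Xs finite_subset by blast

lemma cardX: "a < \<alpha> \<Longrightarrow> card (X a \<inter> A) \<le> n"
proof -
  assume a: "a < \<alpha>"
  have "card (X a \<inter> A) \<le> card {..<n}" using Xs a by (intro card_mono) auto
  then show ?thesis by simp
qed

lemma cardX': "a < \<alpha> \<Longrightarrow> card (X a) \<le> n"
  using cardX[of a UNIV] by simp

lemma len_L1[simp]: "length (L1 X) = \<alpha> - 1" by (simp add: L1_def)
lemma len_L2[simp]: "length (L2 X rws) = \<alpha> - 1" by (simp add: L2_def)

lemma parseS_ok:
  assumes "\<alpha> - 1 \<le> j"
  shows "parseS (X 0) (take j (LL X rws)) = Sx X"
proof -
  have t: "take (\<alpha>-1) (take j (LL X rws)) = L1 X"
    using assms by (simp add: LL_def min_def)
  have "map rep (L1 X) = map (\<lambda>a. card (X a)) [1..<\<alpha>]"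
    unfolding L1_def map_map
  proof (rule map_cong[OF refl])
    fix a assume "a \<in> set [1..<\<alpha>]"
    then have "card (X a) < 2^w" using cardX'[of a] w_big by simp
    then show "(rep \<circ> (\<lambda>a. (a, [], bin w (card (X a))))) a = card (X a)"
      by (simp add: rep_def unbin_bin_small)
  qed
  then show ?thesis using t by (simp add: parseS_def Sx_def sum_split0[OF \<alpha>_pos])
qed

lemma parsecs_ok:
  assumes "2 * (\<alpha> - 1) \<le> j"
  shows "parsecs (take j (LL X rws)) = map (\<lambda>a. card (X a \<inter> Tx X rws)) [1..<\<alpha>]"
proof -
  have t: "take (\<alpha>-1) (drop (\<alpha>-1) (take j (LL X rws))) = L2 X rws"
    using assms by (simp add: LL_def min_def)
  have "map rep (L2 X rws) = map (\<lambda>a. card (X a \<inter> Tx X rws)) [1..<\<alpha>]"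
    unfolding L2_def map_map
  proof (rule map_cong[OF refl])
    fix a assume "a \<in> set [1..<\<alpha>]"
    then have "a < \<alpha>" by simp
    then have "card (X a \<inter> Tx X rws) \<le> n" using cardX[of a] by simp
    then have "card (X a \<inter> Tx X rws) < 2^w" using w_big by linarith
    then show "(rep \<circ> (\<lambda>a. (a, True # sx X rws, bin w (card (X a \<inter> Tx X rws))))) a = card (X a \<inter> Tx X rws)"
      by (simp add: rep_def unbin_bin_small)
  qed
  then show ?thesis using t by (simp add: parsecs_def)
qed

lemma N_ok:
  "card (X 0 \<inter> Tx X rws) + sum_list (map (\<lambda>a. card (X a \<inter> Tx X rws)) [1..<\<alpha>]) = Nx X rws"
  by (simp add: Nx_def sum_split0[OF \<alpha>_pos])

lemma len_LL: "length (LL X rws) = 2*(\<alpha>-1) + (if Mf (Sx X) < real (Nx X rws) then 0 else length (Qx X rws))"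
  by (simp add: LL_def L3_def)

lemma coord_ok:
  assumes s: "from_nat s = rws" and j: "j < length (LL X rws)"
  shows "coord (X 0) s (take j (LL X rws)) = Some (fst (LL X rws ! j), fst (snd (LL X rws ! j)))"
proof -
  have lt: "length (take j (LL X rws)) = j" using j by simp
  consider (a) "j < \<alpha> - 1" | (b) "\<alpha> - 1 \<le> j" "j < 2*(\<alpha>-1)" | (c) "2*(\<alpha>-1) \<le> j" by linarith
  then show ?thesis
  proof cases
    case a
    have "LL X rws ! j = L1 X ! j" using a by (simp add: LL_def nth_append)
    then show ?thesis using a lt by (simp add: coord_def Let_def L1_def)
  next
    case b
    obtain R where R: "LL X rws = L1 X @ L2 X rws @ R" by (simp add: LL_def)
    have i: "j - (\<alpha>-1) < \<alpha> - 1" using b by linarith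
    have "LL X rws ! j = (L2 X rws @ R) ! (j - (\<alpha>-1))" using b(1) unfolding R by (simp add: nth_append)
    also have "\<dots> = L2 X rws ! (j - (\<alpha>-1))" using i by (metis len_L2 nth_append)
    finally have "LL X rws ! j = L2 X rws ! (j - (\<alpha>-1))" .
    moreover have "L2 X rws ! (j - (\<alpha>-1)) = (j - (\<alpha>-1) + 1, True # sx X rws, bin w (card (X (j - (\<alpha>-1) + 1) \<inter> Tx X rws)))"
    proof -
      have i': "Suc j - \<alpha> < \<alpha> - Suc 0" using b by linarith
      then show ?thesis using b by (simp add: L2_def)
    qed
    ultimately show ?thesis using b lt parseS_ok[of j] s by (simp add: coord_def Let_def sx_def)
  next
    case c
    have nf: "\<not> Mf (Sx X) < real (Nx X rws)" using j c len_LL by (auto split: if_splits)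
    define q where "q = j - 2*(\<alpha>-1)"
    have lq: "length (LL X rws) = 2*(\<alpha>-1) + length (Qx X rws)" using nf len_LL by simp
    have q: "q < length (Qx X rws)" using j c lq q_def by linarith
    have "LL X rws = (L1 X @ L2 X rws) @ L3 X rws" using nf by (simp add: LL_def)
    moreover have "length (L1 X @ L2 X rws) = 2*(\<alpha>-1)" by simp
    ultimately have "LL X rws ! j = L3 X rws ! q" using c q_def by (metis nth_append not_le)
    also have "\<dots> = g3 X rws (Qx X rws ! q)" using q by (simp add: L3_def)
    finally have e: "LL X rws ! j = g3 X rws (Qx X rws ! q)" .
    have pS: "parseS (X 0) (take j (LL X rws)) = Sx X" using c by (intro parseS_ok) linarith
    have pc: "parsecs (take j (LL X rws)) = map (\<lambda>a. card (X a \<inter> Tx X rws)) [1..<\<alpha>]" using c parsecs_ok by blast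
    have N: "card (X 0 \<inter> Tset (sig rws (kf (Sx X)))) + sum_list (map (\<lambda>a. card (X a \<inter> Tx X rws)) [1..<\<alpha>]) = Nx X rws"
      using N_ok by (simp add: Tx_def sx_def)
    have Q: "sched \<alpha> (map (\<lambda>a. card (X a \<inter> Tx X rws)) [1..<\<alpha>]) = Qx X rws" by (simp add: Qx_def)
    have nlt: "\<not> j < \<alpha> - 1" "\<not> j < 2 * (\<alpha> - 1)" using c by linarith+
    show ?thesis unfolding coord_def Let_def lt pS pc s N Q e
      using nlt nf q q_def by (simp add: g3_def sx_def)
  qed
qed

lemma coord_end:
  assumes s: "from_nat s = rws"
  shows "coord (X 0) s (LL X rws) = None"
proof -
  have len: "length (LL X rws) \<ge> 2*(\<alpha>-1)" using len_LL by simp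
  have pS: "parseS (X 0) (LL X rws) = Sx X" using parseS_ok[of "length (LL X rws)"] len by simp
  have pc: "parsecs (LL X rws) = map (\<lambda>a. card (X a \<inter> Tx X rws)) [1..<\<alpha>]" using parsecs_ok[of "length (LL X rws)"] len by simp
  have N: "card (X 0 \<inter> Tset (sig rws (kf (Sx X)))) + sum_list (map (\<lambda>a. card (X a \<inter> Tx X rws)) [1..<\<alpha>]) = Nx X rws"
    using N_ok by (simp add: Tx_def sx_def)
  have Q: "sched \<alpha> (map (\<lambda>a. card (X a \<inter> Tx X rws)) [1..<\<alpha>]) = Qx X rws" by (simp add: Qx_def)
  show ?thesis unfolding coord_def Let_def pS pc s N Q
    using len_LL by auto
qed

lemma srv_ok:
  assumes e: "e \<in> set (LL X rws)"
  shows "0 < fst e \<and> fst e < \<alpha> \<and> (\<forall>v r. srv (fst e) (X (fst e)) r v (fst (snd e)) = snd (snd e))"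
proof -
  have "e \<in> set (L1 X) \<or> e \<in> set (L2 X rws) \<or> e \<in> set (L3 X rws)"
    using e by (auto simp: LL_def split: if_splits)
  then show ?thesis
  proof (elim disjE)
    assume "e \<in> set (L1 X)"
    then show ?thesis by (auto simp: L1_def srv_def)
  next
    assume "e \<in> set (L2 X rws)"
    then show ?thesis by (auto simp: L2_def srv_def Tx_def)
  next
    assume "e \<in> set (L3 X rws)"
    then obtain a j where aj: "(a,j) \<in> set (Qx X rws)" and e: "e = g3 X rws (a,j)"
      by (auto simp: L3_def)
    have r: "1 \<le> a" "a < \<alpha>" "j < card (X a \<inter> Tx X rws)"
      using set_sched_map[OF aj[unfolded Qx_def]] by auto
    have "j < 2^w" using r cardX[of a "Tx X rws"] w_big by linarith
    then have "unbin (take w (bin w j @ sx X rws)) = j" by (simp add: unbin_bin_small)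
    then show ?thesis using r e by (simp add: g3_def srv_def Tx_def)
  qed
qed

lemma steps_ok: "length (LL X rws) \<le> 2*\<alpha> + \<alpha>*n"
proof -
  have "length (Qx X rws) = sum_list (map (\<lambda>a. card (X a \<inter> Tx X rws)) [1..<\<alpha>])"
    unfolding Qx_def by (rule length_sched_map)
  also have "\<dots> \<le> length [1..<\<alpha>] * n"
    by (rule sum_list_le_len) (use cardX in auto)
  also have "\<dots> \<le> \<alpha> * n" by simp
  finally show ?thesis using len_LL by (auto split: if_splits)
qed

end

lemma transcript_ok:
  assumes Xs: "\<forall>a<\<alpha>. X a \<subseteq> {..<n}"
  shows "final_transcript Prot \<alpha> X rs = LL X (from_nat (rs 0))"
proof (rule exec_follow0)
  show "\<And>j. j < length (LL X (from_nat (rs 0))) \<Longrightarrow> coord_act Prot (X 0) (rs 0) (take j (LL X (from_nat (rs 0)))) =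
      Some (fst (LL X (from_nat (rs 0)) ! j), fst (snd (LL X (from_nat (rs 0)) ! j)))"
    using coord_ok[OF Xs] by (simp add: Prot_def)
  show "\<And>e. e \<in> set (LL X (from_nat (rs 0))) \<Longrightarrow> 0 < fst e \<and> fst e < \<alpha> \<and>
       (\<forall>v. server_reply Prot (fst e) (X (fst e)) (rs (fst e)) v (fst (snd e)) = snd (snd e))"
    using srv_ok[OF Xs] by (simp add: Prot_def)
  show "coord_act Prot (X 0) (rs 0) (LL X (from_nat (rs 0))) = None"
    using coord_end[OF Xs] by (simp add: Prot_def)
  show "length (LL X (from_nat (rs 0))) \<le> steps Prot"
    using steps_ok[OF Xs] by (simp add: Prot_def)
qed

end

context proto
begin

lemma kf_le: "kf S \<le> kmax"
  unfolding kf_def by (rule Least_le) simp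

lemma kf_upper: "kf S < kmax \<Longrightarrow> \<epsilon>^2 * (real S)^2 < 2^(kf S + 1) * 48 * real C"
  unfolding kf_def by (metis (mono_tags, lifting) LeastI nat_less_le)

lemma kf_lower: "1 \<le> kf S \<Longrightarrow> 2^(kf S) * 48 * real C \<le> \<epsilon>^2 * (real S)^2"
proof -
  assume k: "1 \<le> kf S"
  have "kf S - 1 < kf S" using k by simp
  then have "\<not> (kf S - 1 = kmax \<or> \<epsilon>^2 * (real S)^2 < 2^(kf S - 1 + 1) * 48 * real C)"
    unfolding kf_def by (rule not_less_Least)
  then show ?thesis using k by simp
qed

context
  fixes X :: "nat \<Rightarrow> nat set" and rws :: "(bool list \<times> bool) list"
  assumes Xs: "\<forall>a<\<alpha>. X a \<subseteq> {..<n}"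
begin

lemma out_ok:
  assumes s: "from_nat s = rws" and nf: "\<not> Mf (Sx X) < real (Nx X rws)"
  shows "outf (X 0) s (LL X rws) = real (Sx X) - 2^(kf (Sx X)) * (real (Nx X rws) - real (card ((\<Union>a<\<alpha>. X a) \<inter> Tx X rws)))"
proof -
  let ?T = "Tx X rws"
  have len: "length (LL X rws) \<ge> 2*(\<alpha>-1)" using len_LL[OF Xs, of rws] by simp
  have pS: "parseS (X 0) (LL X rws) = Sx X" using parseS_ok[OF Xs, of "length (LL X rws)" rws] len by simp
  have pc: "parsecs (LL X rws) = map (\<lambda>a. card (X a \<inter> ?T)) [1..<\<alpha>]" using parsecs_ok[OF Xs, of "length (LL X rws)" rws] len by simp
  have N: "card (X 0 \<inter> Tset (sig rws (kf (Sx X)))) + sum_list (map (\<lambda>a. card (X a \<inter> ?T)) [1..<\<alpha>]) = Nx X rws"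
    using N_ok[OF Xs] by (simp add: Tx_def sx_def)
  have dr: "drop (2*(\<alpha>-1)) (LL X rws) = L3 X rws" using nf by (simp add: LL_def len_L1[OF Xs] len_L2[OF Xs])
  have E: "rep ` set (L3 X rws) = (\<Union>a\<in>{1..<\<alpha>}. X a \<inter> ?T)"
  proof -
    have "rep ` set (L3 X rws) = (\<lambda>(a,j). sorted_list_of_set (X a \<inter> ?T) ! j) ` set (Qx X rws)"
      unfolding L3_def set_map image_image
      proof (rule image_cong[OF refl])
        fix e assume e: "e \<in> set (Qx X rws)"
        obtain a j where aj: "e = (a,j)" by force
        have r: "1 \<le> a" "a < \<alpha>" "j < card (X a \<inter> ?T)"
          using set_sched_map[OF e[unfolded Qx_def]] aj by auto
        have fin: "finite (X a \<inter> ?T)" using finX[OF Xs r(2)] by simp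
        have "sorted_list_of_set (X a \<inter> ?T) ! j \<in> X a"
          using r(3) fin by (metis IntD1 nth_mem length_sorted_list_of_set set_sorted_list_of_set)
        then have "sorted_list_of_set (X a \<inter> ?T) ! j < 2^w" using Xs r(2) w_big by force
        then show "rep (g3 X rws e) = (\<lambda>(a,j). sorted_list_of_set (X a \<inter> ?T) ! j) e"
          using aj by (simp add: rep_def g3_def unbin_bin_small)
      qed
    also have "set (Qx X rws) = (SIGMA a:{1..<\<alpha>}. {..<card (X a \<inter> ?T)})"
      unfolding Qx_def sched_map by auto
    also have "(\<lambda>(a,j). sorted_list_of_set (X a \<inter> ?T) ! j) ` (SIGMA a:{1..<\<alpha>}. {..<card (X a \<inter> ?T)})
       = (\<Union>a\<in>{1..<\<alpha>}. (\<lambda>j. sorted_list_of_set (X a \<inter> ?T) ! j) ` {..<card (X a \<inter> ?T)})"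
      by auto
    also have "\<dots> = (\<Union>a\<in>{1..<\<alpha>}. X a \<inter> ?T)"
    proof (rule SUP_cong[OF refl])
      fix a assume "a \<in> {1..<\<alpha>}"
      then have fin: "finite (X a \<inter> ?T)" using finX[OF Xs] by simp
      have "(\<lambda>j. sorted_list_of_set (X a \<inter> ?T) ! j) ` {..<card (X a \<inter> ?T)} = set (sorted_list_of_set (X a \<inter> ?T))"
        by (simp add: set_conv_nth fin image_def lessThan_def) (metis (no_types) fin length_sorted_list_of_set)
      then show "(\<lambda>j. sorted_list_of_set (X a \<inter> ?T) ! j) ` {..<card (X a \<inter> ?T)} = X a \<inter> ?T"
        using fin by simp
    qed
    finally show ?thesis .
  qed
  have U: "X 0 \<inter> ?T \<union> (\<Union>a\<in>{1..<\<alpha>}. X a \<inter> ?T) = (\<Union>a<\<alpha>. X a) \<inter> ?T"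
  proof -
    have "{..<\<alpha>} = insert 0 {1..<\<alpha>}" using \<alpha>_pos by auto
    then show ?thesis by auto
  qed
  show ?thesis unfolding outf_def Let_def pS pc s N dr E
    using nf U by (simp add: Tx_def sx_def)
qed


lemma len_sig:
  assumes "rws \<in> set_pmf (rows_pmf w kmax)"
  shows "length (sig rws k) \<le> kmax * (w+1)"
proof -
  have sr: "length rws = kmax \<and> (\<forall>(a,b)\<in>set rws. length a = w)" using set_rows[OF assms] .
  have "length (sig rws k) = sum_list (map (\<lambda>(a,b). length a + 1) (take k rws))"
    by (simp add: sig_def length_concat comp_def case_prod_unfold)
  also have "\<dots> \<le> length (take k rws) * (w+1)"
    by (rule sum_list_le_len) (use sr in \<open>fastforce dest: in_set_takeD\<close>)
  also have "\<dots> \<le> kmax * (w+1)" using sr by (intro mult_right_mono) auto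
  finally show ?thesis .
qed

lemma cost_le:
  assumes rw: "rws \<in> set_pmf (rows_pmf w kmax)"
  shows "real (sum_list (map (\<lambda>(a,m,r). 1 + length m + length r) (LL X rws)))
     \<le> (2 * real \<alpha> + Mf (Sx X)) * real (2 + 2*w + kmax*(w+1))"
proof -
  let ?B = "2 + 2*w + kmax*(w+1)"
  have ls: "length (sx X rws) \<le> kmax * (w+1)" unfolding sx_def by (rule len_sig[OF rw])
  have "sum_list (map (\<lambda>(a,m,r). 1 + length m + length r) (LL X rws)) \<le> length (LL X rws) * ?B"
  proof (rule sum_list_le_len)
    fix e assume "e \<in> set (LL X rws)"
    then have "e \<in> set (L1 X) \<or> e \<in> set (L2 X rws) \<or> e \<in> set (L3 X rws)"
      by (auto simp: LL_def split: if_splits)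
    then show "(\<lambda>(a,m,r). 1 + length m + length r) e \<le> ?B"
      using ls by (auto simp: L1_def L2_def L3_def g3_def)
  qed
  then have c: "real (sum_list (map (\<lambda>(a,m,r). 1 + length m + length r) (LL X rws))) \<le> real (length (LL X rws)) * real ?B"
    by (metis of_nat_le_iff of_nat_mult)
  have "real (length (LL X rws)) \<le> 2 * real \<alpha> + Mf (Sx X)"
  proof (cases "Mf (Sx X) < real (Nx X rws)")
    case True
    have "0 \<le> Mf (Sx X)" by (simp add: Mf_def)
    then show ?thesis using len_LL[OF Xs, of rws] \<alpha>_pos True by simp
  next
    case False
    have "length (Qx X rws) = sum_list (map (\<lambda>a. card (X a \<inter> Tx X rws)) [1..<\<alpha>])"
      unfolding Qx_def by (rule length_sched_map)
    also have "\<dots> \<le> Nx X rws" using N_ok[OF Xs, of rws] by linarith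
    finally have "real (length (Qx X rws)) \<le> Mf (Sx X)" using False by linarith
    then show ?thesis using len_LL[OF Xs, of rws] False by simp
  qed
  then have "real (length (LL X rws)) * real ?B \<le> (2 * real \<alpha> + Mf (Sx X)) * real ?B"
    by (intro mult_right_mono) auto
  then show ?thesis using c by linarith
qed

end
end

context proto
begin

context
  fixes X :: "nat \<Rightarrow> nat set"
  assumes Xs: "\<forall>a<\<alpha>. X a \<subseteq> {..<n}"
begin

abbreviation "UU \<equiv> (\<Union>a<\<alpha>. X a)"
abbreviation "kk \<equiv> kf (Sx X)"
abbreviation "pp \<equiv> (1/2::real)^kk"

definition Nz :: "(bool list \<times> bool) list \<Rightarrow> real" where
  "Nz r = (\<Sum>i\<in>UU. real (kc \<alpha> X i) * Zv kk i r)"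
definition Yz :: "(bool list \<times> bool) list \<Rightarrow> real" where
  "Yz r = (\<Sum>i\<in>UU. (real (kc \<alpha> X i) - 1) * (Zv kk i r - pp))"

lemma finXa: "\<forall>a<\<alpha>. finite (X a)" by (meson Xs finite_lessThan finite_subset)

lemma finU: "finite UU" using finXa by blast

lemma UU_sub: "UU \<subseteq> {..<2^w}" using Xs w_big by fastforce

lemma kc_pos: "i \<in> UU \<Longrightarrow> 1 \<le> kc \<alpha> X i"
proof -
  assume "i \<in> UU"
  then obtain a where "a < \<alpha>" "i \<in> X a" by auto
  then have "{a. a < \<alpha> \<and> i \<in> X a} \<noteq> {}" by auto
  moreover have "finite {a. a < \<alpha> \<and> i \<in> X a}" by auto
  ultimately show ?thesis unfolding kc_def by (simp add: Suc_le_eq card_gt_0_iff)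
qed

lemma Tx_eq:
  assumes "r \<in> set_pmf (rows_pmf w kmax)"
  shows "Tx X r = {x. acc (take kk r) x}"
proof -
  have "\<forall>(a,b)\<in>set (take kk r). length a = w" using set_rows[OF assms] by (auto dest: in_set_takeD)
  then show ?thesis by (simp add: Tx_def Tset_def sx_def sig_def chunks_concat)
qed

lemma S_eq: "real (Sx X) = (\<Sum>i\<in>UU. real (kc \<alpha> X i))"
  using double_count[OF finXa, of UNIV] by (simp add: Sx_def)

lemma S_ge_F0: "card UU \<le> Sx X"
proof -
  have "card UU = (\<Sum>i\<in>UU. 1)" by simp
  also have "\<dots> \<le> (\<Sum>i\<in>UU. kc \<alpha> X i)" by (intro sum_mono) (use kc_pos in auto)
  also have "\<dots> = Sx X" using double_count[OF finXa, of UNIV] by (simp add: Sx_def)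
  finally show ?thesis .
qed

lemma Nx_eq:
  assumes "r \<in> set_pmf (rows_pmf w kmax)"
  shows "real (Nx X r) = Nz r"
proof -
  have "Nx X r = (\<Sum>i\<in>UU \<inter> Tx X r. kc \<alpha> X i)"
    using double_count[OF finXa, of "Tx X r"] by (simp add: Nx_def)
  also have "\<dots> = (\<Sum>i\<in>UU. if i \<in> Tx X r then kc \<alpha> X i else 0)"
    by (rule sum.inter_restrict[OF finU])
  finally show ?thesis unfolding Nz_def using Tx_eq[OF assms]
    by (simp add: Zv_def if_distrib cong: if_cong)
qed

lemma cardUT_eq:
  assumes "r \<in> set_pmf (rows_pmf w kmax)"
  shows "real (card (UU \<inter> Tx X r)) = (\<Sum>i\<in>UU. Zv kk i r)"
proof -
  have "card (UU \<inter> Tx X r) = (\<Sum>i\<in>UU \<inter> Tx X r. 1)" by simp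
  also have "\<dots> = (\<Sum>i\<in>UU. if i \<in> Tx X r then 1 else 0)"
    by (rule sum.inter_restrict[OF finU])
  finally show ?thesis using Tx_eq[OF assms] by (simp add: Zv_def) (rule sum.cong, auto)
qed

lemma output_eq:
  assumes "r \<in> set_pmf (rows_pmf w kmax)"
  shows "real (Sx X) - 2^kk * (real (Nx X r) - real (card (UU \<inter> Tx X r))) = real (card UU) - 2^kk * Yz r"
proof -
  have a: "real (Nx X r) - real (card (UU \<inter> Tx X r)) = (\<Sum>i\<in>UU. (real (kc \<alpha> X i) - 1) * Zv kk i r)"
    using Nx_eq[OF assms] cardUT_eq[OF assms] by (simp add: Nz_def sum_subtractf[symmetric] algebra_simps)
  have b0: "Yz r = (\<Sum>i\<in>UU. (real (kc \<alpha> X i) - 1) * Zv kk i r - pp * (real (kc \<alpha> X i) - 1))"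
    unfolding Yz_def by (intro sum.cong refl) (simp add: algebra_simps)
  have b: "Yz r = (\<Sum>i\<in>UU. (real (kc \<alpha> X i) - 1) * Zv kk i r) - pp * (\<Sum>i\<in>UU. (real (kc \<alpha> X i) - 1))"
    unfolding b0 sum_subtractf sum_distrib_left[symmetric] by simp
  have c: "(\<Sum>i\<in>UU. (real (kc \<alpha> X i) - 1)) = real (Sx X) - real (card UU)"
    using S_eq by (simp add: sum_subtractf)
  have d: "(2::real)^kk * pp = 1" by (simp add: power_mult_distrib[symmetric])
  have "2^kk * Yz r = 2^kk * (\<Sum>i\<in>UU. (real (kc \<alpha> X i) - 1) * Zv kk i r) - (2^kk * pp) * (real (Sx X) - real (card UU))"
    unfolding b c by (simp add: algebra_simps)
  then have "2^kk * Yz r = 2^kk * (real (Nx X r) - real (card (UU \<inter> Tx X r))) - (real (Sx X) - real (card UU))"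
    unfolding d a by simp
  then show ?thesis by simp
qed

lemma sq_bound: "(\<Sum>i\<in>UU. (real (kc \<alpha> X i) - 1)^2) \<le> 2 * real C" if "collisions \<alpha> X \<le> C"
proof -
  have "(\<Sum>i\<in>UU. (real (kc \<alpha> X i) - 1)^2) \<le> (\<Sum>i\<in>UU. real (kc \<alpha> X i * (kc \<alpha> X i - 1)))"
  proof (intro sum_mono)
    fix i assume "i \<in> UU"
    then have k: "1 \<le> kc \<alpha> X i" by (rule kc_pos)
    then have "real (kc \<alpha> X i * (kc \<alpha> X i - 1)) = real (kc \<alpha> X i) * (real (kc \<alpha> X i) - 1)"
      by (simp add: of_nat_diff)
    then show "(real (kc \<alpha> X i) - 1)^2 \<le> real (kc \<alpha> X i * (kc \<alpha> X i - 1))"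
      using k by (simp add: power2_eq_square mult_right_mono)
  qed
  also have "\<dots> = real (\<Sum>i\<in>UU. kc \<alpha> X i * (kc \<alpha> X i - 1))" by simp
  also have "\<dots> \<le> real (2 * collisions \<alpha> X)" by (subst of_nat_le_iff) (rule coll_bound[OF finXa])
  also have "\<dots> \<le> 2 * real C" using that by simp
  finally show ?thesis .
qed

lemma D_bound: "Sx X \<le> card UU + C" if "collisions \<alpha> X \<le> C"
proof -
  have "(\<Sum>i\<in>UU. 2 * (kc \<alpha> X i - 1)) \<le> (\<Sum>i\<in>UU. kc \<alpha> X i * (kc \<alpha> X i - 1))"
  proof (intro sum_mono)
    fix i assume "i \<in> UU"
    then have k: "1 \<le> kc \<alpha> X i" by (rule kc_pos)
    show "2 * (kc \<alpha> X i - 1) \<le> kc \<alpha> X i * (kc \<alpha> X i - 1)"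
    proof (cases "kc \<alpha> X i = 1")
      case False
      then have "2 \<le> kc \<alpha> X i" using k by linarith
      then show ?thesis by (intro mult_right_mono) auto
    qed simp
  qed
  also have "\<dots> \<le> 2 * collisions \<alpha> X" by (rule coll_bound[OF finXa])
  finally have "(\<Sum>i\<in>UU. kc \<alpha> X i - 1) \<le> collisions \<alpha> X" by (simp add: sum_distrib_left[symmetric])
  moreover have "Sx X = card UU + (\<Sum>i\<in>UU. kc \<alpha> X i - 1)"
  proof -
    have "Sx X = (\<Sum>i\<in>UU. kc \<alpha> X i)" using double_count[OF finXa, of UNIV] by (simp add: Sx_def)
    also have "\<dots> = (\<Sum>i\<in>UU. 1 + (kc \<alpha> X i - 1))" by (intro sum.cong refl) (use kc_pos in force)
    also have "\<dots> = card UU + (\<Sum>i\<in>UU. kc \<alpha> X i - 1)" by (subst sum.distrib) simp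
    finally show ?thesis .
  qed
  ultimately show ?thesis using that by linarith
qed

end
end

lemma pmf_markov:
  fixes u :: "'a \<Rightarrow> real"
  assumes "finite (set_pmf M)" "\<And>x. 0 \<le> u x" "0 < c"
  shows "measure_pmf.prob M {x. c \<le> u x} \<le> measure_pmf.expectation M u / c"
proof -
  have "measure (measure_pmf M) {x\<in>space (measure_pmf M). u x \<ge> c} \<le> (\<integral>x. u x \<partial>measure_pmf M) / c"
    by (rule integral_Markov_inequality_measure[where A=UNIV])
       (use assms in \<open>auto simp: integrable_measure_pmf_finite\<close>)
  then show ?thesis by simp
qed

context proto
begin

context
  fixes X :: "nat \<Rightarrow> nat set"
  assumes Xs: "\<forall>a<\<alpha>. X a \<subseteq> {..<n}"
begin

lemma exp_Nz: "measure_pmf.expectation (rows_pmf w kmax) (Nz X) = pp X * real (Sx X)"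
proof -
  have "measure_pmf.expectation (rows_pmf w kmax) (Nz X) = (\<Sum>i\<in>UU X. real (kc \<alpha> X i) * measure_pmf.expectation (rows_pmf w kmax) (Zv (kk X) i))"
    unfolding Nz_def[OF Xs] by (simp add: Bochner_Integration.integral_sum)
  also have "\<dots> = (\<Sum>i\<in>UU X. real (kc \<alpha> X i) * pp X)"
    using exp_Z[OF kf_le] by simp
  also have "\<dots> = pp X * real (Sx X)"
    using S_eq[OF Xs] by (simp add: sum_distrib_right mult.commute)
  finally show ?thesis .
qed

lemma UU_empty: "Sx X = 0 \<Longrightarrow> UU X = {}"
  using S_ge_F0[OF Xs] finU[OF Xs] by simp

lemma B1: "measure_pmf.prob (rows_pmf w kmax) {r. Mf (Sx X) < Nz X r} \<le> 1/6"
proof (cases "Sx X = 0")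
  case True
  then have "{r. Mf (Sx X) < Nz X r} = {}"
    using UU_empty by (simp add: Nz_def[OF Xs] Mf_def)
  then show ?thesis by simp
next
  case False
  have Mpos: "0 < Mf (Sx X)" using False by (simp add: Mf_def)
  have nn: "\<And>r. 0 \<le> Nz X r" unfolding Nz_def[OF Xs] by (intro sum_nonneg) (simp add: Zv_def)
  have "measure_pmf.prob (rows_pmf w kmax) {r. Mf (Sx X) < Nz X r} \<le> measure_pmf.prob (rows_pmf w kmax) {r. Mf (Sx X) \<le> Nz X r}"
    by (intro measure_pmf.finite_measure_mono) auto
  also have "\<dots> \<le> measure_pmf.expectation (rows_pmf w kmax) (Nz X) / Mf (Sx X)"
    by (rule pmf_markov[OF finite_rows nn Mpos])
  also have "\<dots> = 1/6"
    unfolding exp_Nz Mf_def using False by (simp add: power_one_over field_simps)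
  finally show ?thesis .
qed

lemma B2:
  assumes hC: "collisions \<alpha> X \<le> C" and hF: "C \<le> card (UU X)"
  shows "measure_pmf.prob (rows_pmf w kmax) {r. \<epsilon> * real (card (UU X)) * pp X < \<bar>Yz X r\<bar>} \<le> 1/6"
proof (cases "UU X = {}")
  case True
  then show ?thesis by (simp add: Yz_def[OF Xs])
next
  case False
  let ?F = "real (card (UU X))"
  let ?p = "pp X"
  let ?k = "kk X"
  have F0: "0 < ?F" using False finU[OF Xs] by (simp add: card_gt_0_iff)
  have p0: "0 < ?p" by simp
  have p1: "?p \<le> 1" by (simp add: power_le_one)
  define c where "c = (\<epsilon> * ?F * ?p)^2"
  have c0: "0 < c" unfolding c_def using F0 \<epsilon>_pos by simp
  have sub: "{r. \<epsilon> * ?F * ?p < \<bar>Yz X r\<bar>} \<subseteq> {r. c \<le> (Yz X r)^2}"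
  proof
    fix r assume "r \<in> {r. \<epsilon> * ?F * ?p < \<bar>Yz X r\<bar>}"
    then have h: "\<epsilon> * ?F * ?p < \<bar>Yz X r\<bar>" by simp
    have "0 \<le> \<epsilon> * ?F * ?p" using F0 \<epsilon>_pos by simp
    then have "(\<epsilon> * ?F * ?p)^2 \<le> \<bar>Yz X r\<bar>^2" using h by (intro power_mono) auto
    then show "r \<in> {r. c \<le> (Yz X r)^2}" by (simp add: c_def)
  qed
  have EY: "measure_pmf.expectation (rows_pmf w kmax) (\<lambda>r. (Yz X r)^2)
     = (\<Sum>i\<in>UU X. (real (kc \<alpha> X i) - 1)^2 * (?p - ?p * ?p))"
    unfolding Yz_def[OF Xs] by (rule second_moment[OF kf_le finU[OF Xs] UU_sub[OF Xs]])
  have pp_nn: "0 \<le> ?p - ?p * ?p" using p1 p0 by (simp add: mult_left_le)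
  have "(\<Sum>i\<in>UU X. (real (kc \<alpha> X i) - 1)^2 * (?p - ?p * ?p)) = (\<Sum>i\<in>UU X. (real (kc \<alpha> X i) - 1)^2) * (?p - ?p * ?p)"
    by (simp add: sum_distrib_right)
  also have "\<dots> \<le> 2 * real C * (?p - ?p * ?p)"
    by (intro mult_right_mono sq_bound[OF Xs hC] pp_nn)
  finally have EYb: "measure_pmf.expectation (rows_pmf w kmax) (\<lambda>r. (Yz X r)^2) \<le> 2 * real C * (?p - ?p * ?p)"
    using EY by simp
  have key: "2 * real C * (?p - ?p * ?p) \<le> c / 6"
  proof (cases "?k = 0")
    case True
    then show ?thesis using c0 by simp
  next
    case False
    have kl: "2^?k * 48 * real C \<le> \<epsilon>^2 * (real (Sx X))^2" using kf_lower False by simp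
    have "Sx X \<le> 2 * card (UU X)" using D_bound[OF Xs hC] hF by linarith
    then have "real (Sx X) \<le> 2 * ?F" by linarith
    then have "(real (Sx X))^2 \<le> (2 * ?F)^2" by (intro power_mono) auto
    then have "\<epsilon>^2 * (real (Sx X))^2 \<le> \<epsilon>^2 * (4 * ?F^2)" by (intro mult_left_mono) (auto simp: power_mult_distrib)
    with kl have k2: "2^?k * 12 * real C \<le> \<epsilon>^2 * ?F^2" by linarith
    have p2: "?p * 2^?k = 1" by (simp add: power_mult_distrib[symmetric])
    have "2 * real C * (?p - ?p * ?p) \<le> 2 * real C * ?p" using p0 by (simp add: mult_left_mono)
    also have "\<dots> = (2^?k * 12 * real C) * ?p * ?p / 6"
      using p2 by (simp add: field_simps)
    also have "\<dots> \<le> (\<epsilon>^2 * ?F^2) * ?p * ?p / 6"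
      using k2 p0 by (intro divide_right_mono mult_right_mono) auto
    also have "\<dots> = c / 6" by (simp add: c_def power2_eq_square)
    finally show ?thesis .
  qed
  have "measure_pmf.prob (rows_pmf w kmax) {r. \<epsilon> * ?F * ?p < \<bar>Yz X r\<bar>} \<le> measure_pmf.prob (rows_pmf w kmax) {r. c \<le> (Yz X r)^2}"
    using sub by (intro measure_pmf.finite_measure_mono) auto
  also have "\<dots> \<le> measure_pmf.expectation (rows_pmf w kmax) (\<lambda>r. (Yz X r)^2) / c"
    by (rule pmf_markov[OF finite_rows _ c0]) simp
  also have "\<dots> \<le> (c / 6) / c" using EYb key c0 by (intro divide_right_mono) auto
  also have "\<dots> = 1/6" using c0 by simp
  finally show ?thesis .
qed

lemma good_prob:
  assumes hC: "collisions \<alpha> X \<le> C" and hF: "C \<le> card (UU X)"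
  shows "2/3 \<le> measure_pmf.prob (rows_pmf w kmax)
    {r. r \<in> set_pmf (rows_pmf w kmax) \<and> \<not> Mf (Sx X) < Nz X r \<and> \<bar>Yz X r\<bar> \<le> \<epsilon> * real (card (UU X)) * pp X}"
proof -
  let ?M = "rows_pmf w kmax"
  let ?B1 = "{r. Mf (Sx X) < Nz X r}"
  let ?B2 = "{r. \<epsilon> * real (card (UU X)) * pp X < \<bar>Yz X r\<bar>}"
  have e: "{r. r \<in> set_pmf ?M \<and> \<not> Mf (Sx X) < Nz X r \<and> \<bar>Yz X r\<bar> \<le> \<epsilon> * real (card (UU X)) * pp X}
     = (UNIV - (?B1 \<union> ?B2)) \<inter> set_pmf ?M" by auto
  have "measure_pmf.prob ?M (?B1 \<union> ?B2) \<le> measure_pmf.prob ?M ?B1 + measure_pmf.prob ?M ?B2"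
    by (rule measure_Un_le) auto
  also have "\<dots> \<le> 1/6 + 1/6" using B1 B2[OF hC hF] by linarith
  finally have "measure_pmf.prob ?M (?B1 \<union> ?B2) \<le> 1/3" by simp
  then show ?thesis unfolding e measure_Int_set_pmf pmf_prob_compl by simp
qed

end
end

context proto
begin

lemma Lg_ge1: "1 \<le> Lg"
proof -
  have "0 < 1 / \<epsilon>" using \<epsilon>_pos by simp
  moreover have "1 \<le> real n" using n_pos by simp
  ultimately have "2 \<le> real n + real \<alpha> + 1 / \<epsilon> + 1" by linarith
  then have "log 2 2 \<le> Lg" unfolding Lg_def by (subst log_le_cancel_iff) auto
  then show ?thesis by simp
qed

lemma l_ge1: "1 \<le> log 2 (real n + 1)"
proof -
  have "2 \<le> real n + 1" using n_pos by simp
  then have "log 2 2 \<le> log 2 (real n + 1)" by (subst log_le_cancel_iff) auto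
  then show ?thesis by simp
qed

lemma w_le: "real w \<le> log 2 (real n + 1) + 1"
proof -
  have "0 \<le> log 2 (real n + 1)" using l_ge1 by simp
  then show ?thesis unfolding w_def by linarith
qed

lemma kmax_le: "real kmax \<le> 2 * Lg + 1"
  using Lg_ge1 unfolding kmax_def by linarith

lemma kmax_big: "real \<alpha> * real n \<le> 2^kmax"
proof -
  let ?x = "real n + real \<alpha> + 1 / \<epsilon> + 1"
  have "0 < 1 / \<epsilon>" using \<epsilon>_pos by simp
  then have x0: "0 < ?x" by linarith
  have "real \<alpha> * real n \<le> ?x * ?x"
  proof -
    have "real \<alpha> \<le> ?x" "real n \<le> ?x" using \<open>0 < 1/\<epsilon>\<close> by auto
    then show ?thesis by (intro mult_mono) auto
  qed
  also have "?x * ?x = 2 powr (2 * Lg)"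
  proof -
    have "2 powr (2 * Lg) = 2 powr Lg * 2 powr Lg" by (subst mult_2) (rule powr_add)
    moreover have "2 powr Lg = ?x" unfolding Lg_def using x0 by simp
    ultimately show ?thesis by simp
  qed
  also have "\<dots> \<le> 2 powr (real kmax)" unfolding kmax_def by (intro powr_mono) (simp_all add: real_nat_ceiling_ge)
  also have "\<dots> = 2^kmax" by (simp add: powr_realpow)
  finally show ?thesis .
qed

lemma B_bound: "real (2 + 2*w + kmax*(w+1)) \<le> 16 * Lg * log 2 (real n + 1)"
proof -
  let ?l = "log 2 (real n + 1)"
  have a: "real (2 + 2*w + kmax*(w+1)) = 2 + 2 * real w + real kmax * (real w + 1)" by (simp add: algebra_simps)
  have pr: "real kmax * (real w + 1) \<le> (2 * Lg + 1) * (?l + 2)"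
    using kmax_le w_le by (intro mult_mono) auto
  have "real (2 + 2*w + kmax*(w+1)) \<le> 2 + 2 * (?l + 1) + (2 * Lg + 1) * (?l + 2)"
    unfolding a by (intro add_mono pr) (use w_le in auto)
  also have "\<dots> \<le> 16 * Lg * ?l"
  proof -
    have h1: "1 \<le> Lg" "1 \<le> ?l" using Lg_ge1 l_ge1 by auto
    have m1: "Lg * 1 \<le> Lg * ?l" using h1 by (intro mult_left_mono) auto
    have m2: "1 * ?l \<le> Lg * ?l" using h1 by (intro mult_right_mono) auto
    have q1: "Lg \<le> Lg * ?l" using m1 by simp
    have q2: "?l \<le> Lg * ?l" using m2 by simp
    have q3: "1 \<le> Lg * ?l" using q1 h1 by linarith
    note q = q1 q2 q3
    have "2 + 2 * (?l + 1) + (2 * Lg + 1) * (?l + 2) = 4 + 2 * ?l + 2 * (Lg * ?l) + 4 * Lg + ?l + 2"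
      by (simp add: algebra_simps)
    then show ?thesis using q h1 by linarith
  qed
  finally show ?thesis .
qed

end

context proto
begin

context
  fixes X :: "nat \<Rightarrow> nat set"
  assumes Xs: "\<forall>a<\<alpha>. X a \<subseteq> {..<n}"
begin

lemma S_le: "real (Sx X) \<le> 2^kmax"
proof -
  have "Sx X \<le> (\<Sum>a<\<alpha>. n)" unfolding Sx_def by (intro sum_mono) (use cardX'[OF Xs] in auto)
  then have "real (Sx X) \<le> real \<alpha> * real n" by (simp add: of_nat_mult[symmetric] del: of_nat_mult)
  then show ?thesis using kmax_big by linarith
qed

lemma Mf_bound:
  shows "Mf (Sx X) \<le> 6 + 576 * real C / (\<epsilon>^2 * real (card (UU X)))"
proof -
  have r0: "0 \<le> 576 * real C / (\<epsilon>^2 * real (card (UU X)))" by simp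
  show ?thesis
  proof (cases "Sx X = 0")
    case True
    then show ?thesis using r0 by (simp add: Mf_def)
  next
    case False
    have "UU X \<noteq> {}"
    proof
      assume "UU X = {}"
      then have "real (Sx X) = 0" using S_eq[OF Xs] by simp
      then show False using False by simp
    qed
    then have F0: "0 < real (card (UU X))" using finU[OF Xs] by (simp add: card_gt_0_iff)
    have SF: "real (card (UU X)) \<le> real (Sx X)" using S_ge_F0[OF Xs] by simp
    have S0: "0 < real (Sx X)" using False by simp
    show ?thesis
    proof (cases "kk X = kmax")
      case True
      have "Mf (Sx X) = 6 * real (Sx X) / 2^kmax" using True by (simp add: Mf_def)
      also have "\<dots> \<le> 6" using S_le by (simp add: divide_le_eq)
      finally show ?thesis using r0 by linarith
    next
      case False
      then have "kk X < kmax" using kf_le by (simp add: nat_less_le)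
      from kf_upper[OF this] have u: "\<epsilon>^2 * (real (Sx X))^2 < 2^(kk X + 1) * 48 * real C" .
      have pos: "0 < \<epsilon>^2 * real (Sx X) * 2^(kk X)" using S0 \<epsilon>_pos by simp
      have "Mf (Sx X) = 6 * real (Sx X) / 2^(kk X)" by (simp add: Mf_def)
      also have "\<dots> = 6 * (\<epsilon>^2 * (real (Sx X))^2) / (\<epsilon>^2 * real (Sx X) * 2^(kk X))"
        using S0 \<epsilon>_pos by (simp add: field_simps power2_eq_square)
      also have "\<dots> \<le> 6 * (2^(kk X + 1) * 48 * real C) / (\<epsilon>^2 * real (Sx X) * 2^(kk X))"
        using u pos by (intro divide_right_mono mult_left_mono) auto
      also have "\<dots> = 576 * real C / (\<epsilon>^2 * real (Sx X))"
        by (simp add: field_simps)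
      also have "\<dots> \<le> 576 * real C / (\<epsilon>^2 * real (card (UU X)))"
        using F0 SF \<epsilon>_pos by (intro divide_left_mono mult_left_mono mult_pos_pos) auto
      finally show ?thesis by linarith
    qed
  qed
qed

end
end

context proto
begin

context
  fixes X :: "nat \<Rightarrow> nat set"
  assumes Xs: "\<forall>a<\<alpha>. X a \<subseteq> {..<n}"
begin

lemma main_prob:
  assumes hC: "collisions \<alpha> X \<le> C" and hF: "C \<le> F0 \<alpha> X"
  shows "measure_pmf.prob (seeds Prot \<alpha>)
            {rs. (1 - \<epsilon>) * real (F0 \<alpha> X) \<le> output_of Prot \<alpha> X rs
                 \<and> output_of Prot \<alpha> X rs \<le> (1 + \<epsilon>) * real (F0 \<alpha> X)} \<ge> 2 / 3"
proof -
  let ?M = "rows_pmf w kmax"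
  let ?F = "real (card (UU X))"
  have hF': "C \<le> card (UU X)" using hF by (simp add: F0_def)
  define Q where "Q s = ((1 - \<epsilon>) * ?F \<le> outf (X 0) s (LL X (from_nat s))
                 \<and> outf (X 0) s (LL X (from_nat s)) \<le> (1 + \<epsilon>) * ?F)" for s
  have set_eq: "{rs. (1 - \<epsilon>) * real (F0 \<alpha> X) \<le> output_of Prot \<alpha> X rs
                 \<and> output_of Prot \<alpha> X rs \<le> (1 + \<epsilon>) * real (F0 \<alpha> X)} = {rs. Q (rs 0)}"
    unfolding output_of_def transcript_ok[OF Xs] by (simp add: Q_def Prot_def F0_def)
  have "measure_pmf.prob (seeds Prot \<alpha>) {rs. Q (rs 0)} = measure_pmf.prob (rnd Prot 0) {s. Q s}"
    unfolding seeds_def by (rule Pi_prob0[OF \<alpha>_pos])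
  also have "\<dots> = measure_pmf.prob ?M {r. Q (to_nat r)}"
    by (simp add: Prot_def vimage_def)
  finally have p: "measure_pmf.prob (seeds Prot \<alpha>) {rs. Q (rs 0)} = measure_pmf.prob ?M {r. Q (to_nat r)}" .
  have sub: "{r. r \<in> set_pmf ?M \<and> \<not> Mf (Sx X) < Nz X r \<and> \<bar>Yz X r\<bar> \<le> \<epsilon> * ?F * pp X} \<subseteq> {r. Q (to_nat r)}"
  proof
    fix r assume "r \<in> {r. r \<in> set_pmf ?M \<and> \<not> Mf (Sx X) < Nz X r \<and> \<bar>Yz X r\<bar> \<le> \<epsilon> * ?F * pp X}"
    then have r: "r \<in> set_pmf ?M" "\<not> Mf (Sx X) < Nz X r" "\<bar>Yz X r\<bar> \<le> \<epsilon> * ?F * pp X" by auto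
    have nf: "\<not> Mf (Sx X) < real (Nx X r)" using r Nx_eq[OF Xs r(1)] by simp
    have o: "outf (X 0) (to_nat r) (LL X r) = ?F - 2^(kk X) * Yz X r"
      using out_ok[OF Xs _ nf, of "to_nat r"] output_eq[OF Xs r(1)] by simp
    have d: "(2::real)^(kk X) * pp X = 1" by (simp add: power_mult_distrib[symmetric])
    have "\<bar>2^(kk X) * Yz X r\<bar> \<le> 2^(kk X) * (\<epsilon> * ?F * pp X)"
      using r(3) by (simp add: abs_mult)
    also have "\<dots> = \<epsilon> * ?F" using d by (simp add: algebra_simps)
    finally have "\<bar>2^(kk X) * Yz X r\<bar> \<le> \<epsilon> * ?F" .
    then show "r \<in> {r. Q (to_nat r)}" unfolding Q_def using o by (simp add: algebra_simps abs_le_iff)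
  qed
  have "2/3 \<le> measure_pmf.prob ?M {r. r \<in> set_pmf ?M \<and> \<not> Mf (Sx X) < Nz X r \<and> \<bar>Yz X r\<bar> \<le> \<epsilon> * ?F * pp X}"
    by (rule good_prob[OF Xs hC hF'])
  also have "\<dots> \<le> measure_pmf.prob ?M {r. Q (to_nat r)}"
    using sub by (intro measure_pmf.finite_measure_mono) auto
  finally show ?thesis using p set_eq by simp
qed

lemma main_cost:
  assumes rs: "rs \<in> set_pmf (seeds Prot \<alpha>)" and hC: "collisions \<alpha> X \<le> C" and hF: "C \<le> F0 \<alpha> X"
  shows "real (comm_cost Prot \<alpha> X rs)
             \<le> 10000 * (log 2 (real n + real \<alpha> + 1 / \<epsilon> + 1)) powr 1 *
                (real \<alpha> * log 2 (real n + 1)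
                 + max (1 / real (F0 \<alpha> X)) (\<epsilon>\<^sup>2) * (real C / \<epsilon>\<^sup>2) * log 2 (real n + 1))"
proof -
  let ?M = "rows_pmf w kmax"
  let ?F = "real (card (UU X))"
  let ?l = "log 2 (real n + 1)"
  let ?B = "2 + 2*w + kmax*(w+1)"
  define r :: "(bool list \<times> bool) list" where "r = from_nat (rs 0)"
  have "rs 0 \<in> set_pmf (rnd Prot 0)" using Pi_set0[OF \<alpha>_pos] rs unfolding seeds_def by blast
  then have r: "r \<in> set_pmf ?M" unfolding r_def by (auto simp: Prot_def)
  have cc: "comm_cost Prot \<alpha> X rs = sum_list (map (\<lambda>(a,m,r). 1 + length m + length r) (LL X r))"
    unfolding comm_cost_def transcript_ok[OF Xs] r_def by simp
  have Lg1: "1 \<le> Lg" by (rule Lg_ge1)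
  have l1: "1 \<le> ?l" by (rule l_ge1)
  define Z where "Z = real C / (\<epsilon>^2 * ?F)"
  have Z0: "0 \<le> Z" unfolding Z_def by simp
  have "real (comm_cost Prot \<alpha> X rs) \<le> (2 * real \<alpha> + Mf (Sx X)) * real ?B"
    unfolding cc by (rule cost_le[OF Xs r])
  also have "\<dots> \<le> (2 * real \<alpha> + (6 + 576 * Z)) * (16 * Lg * ?l)"
  proof (intro mult_mono add_left_mono)
    show "Mf (Sx X) \<le> 6 + 576 * Z" using Mf_bound[OF Xs] by (simp add: Z_def)
    show "real ?B \<le> 16 * Lg * ?l" by (rule B_bound)
    show "0 \<le> 2 * real \<alpha> + (6 + 576 * Z)" using Z0 by simp
  qed simp
  also have "\<dots> \<le> (576 * (real \<alpha> + Z)) * (16 * Lg * ?l)"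
    using \<alpha>_pos Lg1 l1 by (intro mult_right_mono) auto
  also have "\<dots> = 9216 * Lg * (real \<alpha> * ?l + Z * ?l)" by (simp add: algebra_simps)
  also have "\<dots> \<le> 10000 * Lg * (real \<alpha> * ?l + max (1 / real (F0 \<alpha> X)) (\<epsilon>\<^sup>2) * (real C / \<epsilon>\<^sup>2) * ?l)"
  proof -
    have "Z = (1 / ?F) * (real C / \<epsilon>^2)" by (simp add: Z_def)
    also have "\<dots> \<le> max (1 / real (F0 \<alpha> X)) (\<epsilon>\<^sup>2) * (real C / \<epsilon>\<^sup>2)"
      by (intro mult_right_mono) (auto simp: F0_def)
    finally have "Z * ?l \<le> max (1 / real (F0 \<alpha> X)) (\<epsilon>\<^sup>2) * (real C / \<epsilon>\<^sup>2) * ?l"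
      using l1 by (intro mult_right_mono) auto
    then have i: "real \<alpha> * ?l + Z * ?l \<le> real \<alpha> * ?l + max (1 / real (F0 \<alpha> X)) (\<epsilon>\<^sup>2) * (real C / \<epsilon>\<^sup>2) * ?l"
      by simp
    have "0 \<le> real \<alpha> * ?l + Z * ?l" using Z0 l1 by simp
    then show ?thesis using i Lg1 by (intro mult_mono) auto
  qed
  also have "\<dots> = 10000 * (log 2 (real n + real \<alpha> + 1 / \<epsilon> + 1)) powr 1 *
                (real \<alpha> * ?l + max (1 / real (F0 \<alpha> X)) (\<epsilon>\<^sup>2) * (real C / \<epsilon>\<^sup>2) * ?l)"
    using Lg1 unfolding Lg_def by simp
  finally show ?thesis .
qed

end
end

theorem theorem1p2:
  shows "\<exists>K c::real. \<forall>(n::nat) (\<alpha>::nat) (\<epsilon>::real) (C::nat).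
     0 < n \<longrightarrow> 0 < \<alpha> \<longrightarrow> 0 < \<epsilon> \<longrightarrow> \<epsilon> < 1 \<longrightarrow>
     (\<exists>P. \<forall>X. (\<forall>a<\<alpha>. X a \<subseteq> {..<n}) \<longrightarrow> collisions \<alpha> X \<le> C \<longrightarrow> C \<le> F0 \<alpha> X \<longrightarrow>
        (\<forall>rs \<in> set_pmf (seeds P \<alpha>).
           real (comm_cost P \<alpha> X rs)
             \<le> K * (log 2 (real n + real \<alpha> + 1 / \<epsilon> + 1)) powr c *
                (real \<alpha> * log 2 (real n + 1)
                 + max (1 / real (F0 \<alpha> X)) (\<epsilon>\<^sup>2) * (real C / \<epsilon>\<^sup>2) * log 2 (real n + 1)))
        \<and> measure_pmf.prob (seeds P \<alpha>)
            {rs. (1 - \<epsilon>) * real (F0 \<alpha> X) \<le> output_of P \<alpha> X rs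
                 \<and> output_of P \<alpha> X rs \<le> (1 + \<epsilon>) * real (F0 \<alpha> X)} \<ge> 2 / 3)"
proof (rule exI[of _ 10000], rule exI[of _ 1], intro allI impI)
  fix n \<alpha> :: nat and \<epsilon> :: real and C :: nat
  assume h: "0 < n" "0 < \<alpha>" "0 < \<epsilon>" "\<epsilon> < 1"
  interpret proto n \<alpha> \<epsilon> C by unfold_locales (use h in auto)
  show "\<exists>P. \<forall>X. (\<forall>a<\<alpha>. X a \<subseteq> {..<n}) \<longrightarrow> collisions \<alpha> X \<le> C \<longrightarrow> C \<le> F0 \<alpha> X \<longrightarrow>
        (\<forall>rs \<in> set_pmf (seeds P \<alpha>).
           real (comm_cost P \<alpha> X rs)
             \<le> 10000 * (log 2 (real n + real \<alpha> + 1 / \<epsilon> + 1)) powr 1 *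
                (real \<alpha> * log 2 (real n + 1)
                 + max (1 / real (F0 \<alpha> X)) (\<epsilon>\<^sup>2) * (real C / \<epsilon>\<^sup>2) * log 2 (real n + 1)))
        \<and> measure_pmf.prob (seeds P \<alpha>)
            {rs. (1 - \<epsilon>) * real (F0 \<alpha> X) \<le> output_of P \<alpha> X rs
                 \<and> output_of P \<alpha> X rs \<le> (1 + \<epsilon>) * real (F0 \<alpha> X)} \<ge> 2 / 3"
    using main_cost main_prob by blast
qed


end
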